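(* Let $k_0,k_1,k_{-1},k_2,e_T$ be positive real numbers and consider the system \[ \dot s = k_0-k_1(e_T-c)s+k_{-1}c,\qquad \dot c = k_1(e_T-c)s-(k_{-1}+k_2)c . \] Let $W_1:=\{(s,c): s\ge 0,\ \max\{0,\frac{k_1e_Ts-k_0}{k_1s+k_{-1}}\}\le c\le \frac{k_1e_Ts}{k_1s+k_{-1}+k_2}\}$, let $w(s):=\frac{k_1e_Ts}{k_1s+k_{-1}+k_2}$, and set \[ \varepsilon_c:=\frac{k_1e_T}{k_{-1}+k_2},\qquad \tau_0:=k_{-1}+k_2,\qquad \varepsilon^*:=\frac{k_0k_1e_T}{(k_{-1}+k_2)^2}. \] Let $(s(t),c(t))$ be a solution with initial value in $W_1$, let $L(t):=|c(t)-w(s(t))|$, and let $v:=\sup_{t\ge0}|\dot s(t)|$ along this solution. Then for all $t\ge 0$, with $\tau:=\tau_0 t=(k_{-1}+k_2)t$, \[ L(t)^2\le L(0)^2e^{-\tau}+\frac{(\varepsilon_c v)^2}{\tau_0^2}\left(1-e^{-\tau}\right) \quad\text{and}\quad L(t)^2\le L(0)^2e^{-\tau}+\frac{(\varepsilon_c k_0)^2}{(k_{-1}+k_2)^2}=L(0)^2e^{-\tau}+(\varepsilon^* )^2 . \] In particular the solution approaches the curve $c=w(s)$ up to an error $(\varepsilon^* )^2$ in $L^2$, at exponential rate $k_{-1}+k_2$.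
   Context: The curve $c=w(s)$ is the quasi-steady-state (QSS) variety, i.e. the $c$-nullcline of the system; $W_1$ is the region between the $s$-nullcline (or the $s$-axis) and the $c$-nullcline. *)

theory Defs
  imports "HOL-Analysis.Analysis"
begin

text \<open>Right-hand sides of the system
  s' = k0 - k1 (eT - c) s + km1 c,   c' = k1 (eT - c) s - (km1 + k2) c.
  Here km1 stands for k_{-1}.\<close>

definition fs :: "real \<Rightarrow> real \<Rightarrow> real \<Rightarrow> real \<Rightarrow> real \<Rightarrow> real \<Rightarrow> real \<Rightarrow> real" where
  "fs k0 k1 km1 k2 eT s c = k0 - k1 * (eT - c) * s + km1 * c"

definition fc :: "real \<Rightarrow> real \<Rightarrow> real \<Rightarrow> real \<Rightarrow> real \<Rightarrow> real \<Rightarrow> real \<Rightarrow> real" where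
  "fc k0 k1 km1 k2 eT s c = k1 * (eT - c) * s - (km1 + k2) * c"

definition w :: "real \<Rightarrow> real \<Rightarrow> real \<Rightarrow> real \<Rightarrow> real \<Rightarrow> real" where
  "w k1 km1 k2 eT s = k1 * eT * s / (k1 * s + km1 + k2)"

definition W1 :: "real \<Rightarrow> real \<Rightarrow> real \<Rightarrow> real \<Rightarrow> real \<Rightarrow> (real \<times> real) set" where
  "W1 k0 k1 km1 k2 eT = {(s, c). s \<ge> 0 \<and>
      max 0 ((k1 * eT * s - k0) / (k1 * s + km1)) \<le> c \<and>
      c \<le> k1 * eT * s / (k1 * s + km1 + k2)}"

definition eps_c :: "real \<Rightarrow> real \<Rightarrow> real \<Rightarrow> real \<Rightarrow> real" where
  "eps_c k1 km1 k2 eT = k1 * eT / (km1 + k2)"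

definition tau0 :: "real \<Rightarrow> real \<Rightarrow> real" where
  "tau0 km1 k2 = km1 + k2"

definition eps_star :: "real \<Rightarrow> real \<Rightarrow> real \<Rightarrow> real \<Rightarrow> real \<Rightarrow> real" where
  "eps_star k0 k1 km1 k2 eT = k0 * k1 * eT / (km1 + k2)^2"

end

theory Submission
  imports Defs
begin

lemma hneg_deriv: "((\<lambda>x::real. (min x 0)^2) has_real_derivative 2 * min x 0) (at x)"
proof (cases "x = 0")
  case True
  have ev: "\<forall>\<^sub>F y in at (0::real). min y 0 = ((min y 0)^2 - (min 0 0)^2) / (y - 0)"
    unfolding eventually_at_filter by (auto simp: power2_eq_square min_def)
  have "((\<lambda>y::real. min y 0) \<longlongrightarrow> min 0 0) (at 0)"
    by (intro tendsto_intros)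
  then have "((\<lambda>y::real. ((min y 0)^2 - (min 0 0)^2) / (y - 0)) \<longlongrightarrow> 0) (at 0)"
    using tendsto_cong[OF ev] by simp
  then show ?thesis using True by (simp add: has_field_derivative_iff)
next
  case False
  show ?thesis
  proof (cases "x < 0")
    case True
    have "((\<lambda>x::real. x^2) has_real_derivative 2 * min x 0) (at x)"
      using True by (auto intro!: derivative_eq_intros)
    then show ?thesis
      apply (rule has_field_derivative_transform_within_open[where S="{..<0}"])
      using True by auto
  next
    case f2: False
    then have "x > 0" using False by auto
    have "((\<lambda>x::real. 0) has_real_derivative 2 * min x 0) (at x)"
      using \<open>x>0\<close> by (auto intro!: derivative_eq_intros)
    then show ?thesis
      apply (rule has_field_derivative_transform_within_open[where S="{0<..}"])
      using \<open>x>0\<close> by auto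
  qed
qed

lemma nonincr:
  fixes f f' :: "real \<Rightarrow> real"
  assumes d: "\<And>t. 0 \<le> t \<Longrightarrow> t \<le> X \<Longrightarrow> (f has_real_derivative f' t) (at t within {0..})"
    and n: "\<And>t. 0 \<le> t \<Longrightarrow> t \<le> X \<Longrightarrow> f' t \<le> 0"
    and x: "0 \<le> x" "x \<le> X"
  shows "f x \<le> f 0"
proof (cases "x = 0")
  case True then show ?thesis by simp
next
  case False
  then have x0: "0 < x" using x by auto
  have "continuous_on {0..x} f"
    unfolding continuous_on_eq_continuous_within
  proof
    fix t assume t: "t \<in> {0..x}"
    have "continuous (at t within {0..}) f"
      using d[of t] t x by (auto intro: DERIV_continuous)
    then show "continuous (at t within {0..x}) f"
      by (rule continuous_within_subset) auto
  qed
  moreover have "\<And>t. 0 < t \<Longrightarrow> t < x \<Longrightarrow> f differentiable (at t)"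
  proof -
    fix t :: real assume t: "0 < t" "t < x"
    have "at t within {0..} = at t"
      by (rule at_within_interior) (use t in auto)
    then have "(f has_real_derivative f' t) (at t)" using d[of t] t x by auto
    then show "f differentiable (at t)" by (auto simp: real_differentiable_def)
  qed
  ultimately obtain l z where z: "0 < z" "z < x" "DERIV f z :> l" "f x - f 0 = (x - 0) * l"
    using MVT[OF x0] by blast
  have "at z within {0..} = at z"
    by (rule at_within_interior) (use z in auto)
  then have "DERIV f z :> f' z" using d[of z] z x by auto
  then have "l = f' z" using z(3) DERIV_unique by blast
  then have "l \<le> 0" using n[of z] z x by auto
  then have "x * l \<le> 0" using x0 by (simp add: mult_nonneg_nonpos)
  then show ?thesis using z(4) by simp
qed

lemma vbound:
  fixes a b d p q M :: real
  assumes "a \<ge> 0" "b \<ge> 0" "d \<ge> 0" "a + b \<le> M"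
  shows "2*min p 0*(-a*p + b*q) + 2*min q 0*(a*p - d*q) \<le> M*((min p 0)^2 + (min q 0)^2)"
proof (cases "p < 0")
  case True
  show ?thesis
  proof (cases "q < 0")
    case True
    have "2*(a+b)*p*q \<le> (a+b)*(p^2+q^2)"
    proof -
      have "2*p*q \<le> p^2+q^2" by (rule sum_squares_bound)
      then have "(a+b)*(2*p*q) \<le> (a+b)*(p^2+q^2)" using assms by (intro mult_left_mono) auto
      then show ?thesis by (simp add: algebra_simps)
    qed
    moreover have "(a+b)*(p^2+q^2) \<le> M*(p^2+q^2)" using assms by (intro mult_right_mono) auto
    moreover have "a*p*p \<ge> 0" using assms by (simp add: mult.assoc mult_nonneg_nonneg)
    moreover have "d*q*q \<ge> 0" using assms
      by (simp add: mult.assoc mult_nonneg_nonneg)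
    ultimately show ?thesis using \<open>p<0\<close> \<open>q<0\<close> by (simp add: algebra_simps power2_eq_square)
  next
    case False
    have "b*p*q \<le> 0" using assms \<open>p<0\<close> False by (simp add: mult_nonneg_nonpos2 mult_nonpos_nonneg mult_nonneg_nonpos)
    moreover have "a*p*p \<ge> 0" using assms \<open>p<0\<close> by (simp add: mult.assoc mult_nonneg_nonneg)
    moreover have "M*p*p \<ge> 0" using assms \<open>p<0\<close> by (simp add: mult.assoc mult_nonneg_nonneg)
    ultimately show ?thesis using \<open>p<0\<close> False by (simp add: algebra_simps power2_eq_square)
  qed
next
  case False
  show ?thesis
  proof (cases "q < 0")
    case True
    have "a*p*q \<le> 0" using assms \<open>q<0\<close> False by (simp add: mult_nonneg_nonpos2 mult_nonpos_nonneg mult_nonneg_nonpos)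
    moreover have "d*q*q \<ge> 0" using assms \<open>q<0\<close> by (simp add: mult.assoc mult_nonneg_nonneg)
    moreover have "M*q*q \<ge> 0" using assms \<open>q<0\<close> by (simp add: mult.assoc mult_nonneg_nonneg)
    ultimately show ?thesis using \<open>q<0\<close> False by (simp add: algebra_simps power2_eq_square)
  next
    case f2: False
    then show ?thesis using False by simp
  qed
qed
lemma cont_on_from:
  fixes g :: "real \<Rightarrow> real"
  assumes "\<And>t. 0 \<le> t \<Longrightarrow> continuous (at t within {0..}) g"
  shows "continuous_on {0..X} g"
  unfolding continuous_on_eq_continuous_within
proof
  fix x assume "x \<in> {0..X}"
  then have "continuous (at x within {0..}) g" using assms by auto
  then show "continuous (at x within {0..X}) g"
    by (rule continuous_within_subset) auto
qed

theorem proposition4p5: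
  fixes k0 k1 km1 k2 eT :: real and s c :: "real \<Rightarrow> real"
  assumes pos: "k0 > 0" "k1 > 0" "km1 > 0" "k2 > 0" "eT > 0"
    and ds: "\<And>t. t \<ge> 0 \<Longrightarrow>
       (s has_real_derivative fs k0 k1 km1 k2 eT (s t) (c t)) (at t within {0..})"
    and dc: "\<And>t. t \<ge> 0 \<Longrightarrow>
       (c has_real_derivative fc k0 k1 km1 k2 eT (s t) (c t)) (at t within {0..})"
    and init: "(s 0, c 0) \<in> W1 k0 k1 km1 k2 eT"
  defines "L \<equiv> \<lambda>t. \<bar>c t - w k1 km1 k2 eT (s t)\<bar>"
    and "v \<equiv> Sup ((\<lambda>t. \<bar>fs k0 k1 km1 k2 eT (s t) (c t)\<bar>) ` {0..})"
  shows "\<forall>t\<ge>0.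
     L t ^ 2 \<le> L 0 ^ 2 * exp (- (tau0 km1 k2 * t))
        + (eps_c k1 km1 k2 eT * v)^2 / (tau0 km1 k2)^2 * (1 - exp (- (tau0 km1 k2 * t)))
   \<and> L t ^ 2 \<le> L 0 ^ 2 * exp (- (tau0 km1 k2 * t))
        + (eps_c k1 km1 k2 eT * k0)^2 / (km1 + k2)^2
   \<and> L 0 ^ 2 * exp (- (tau0 km1 k2 * t)) + (eps_c k1 km1 k2 eT * k0)^2 / (km1 + k2)^2
      = L 0 ^ 2 * exp (- (tau0 km1 k2 * t)) + (eps_star k0 k1 km1 k2 eT)^2"
proof -
  define K where "K = km1 + k2"
  have K0: "K > 0" using pos by (simp add: K_def)
  define P where "P t = fs k0 k1 km1 k2 eT (s t) (c t)" for t
  define Q where "Q t = fc k0 k1 km1 k2 eT (s t) (c t)" for t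
  define a where "a t = k1 * (eT - c t)" for t
  define b where "b t = k1 * s t + km1" for t
  define d where "d t = k1 * s t + K" for t
  have ds': "(s has_real_derivative P t) (at t within {0..})" if "t \<ge> 0" for t
    using ds[OF that] by (simp add: P_def)
  have dc': "(c has_real_derivative Q t) (at t within {0..})" if "t \<ge> 0" for t
    using dc[OF that] by (simp add: Q_def)
  have dP: "(P has_real_derivative (- a t * P t + b t * Q t)) (at t within {0..})" if t: "t \<ge> 0" for t
  proof -
    have e: "P = (\<lambda>t. k0 - k1 * (eT - c t) * s t + km1 * c t)"
      by (auto simp: P_def fs_def)
    show ?thesis unfolding e
      by (rule derivative_eq_intros ds'[OF t] dc'[OF t] refl)+
        (simp add: a_def b_def P_def Q_def fs_def fc_def algebra_simps)
  qed
  have dQ: "(Q has_real_derivative (a t * P t - d t * Q t)) (at t within {0..})" if t: "t \<ge> 0" for t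
  proof -
    have e: "Q = (\<lambda>t. k1 * (eT - c t) * s t - (km1 + k2) * c t)"
      by (auto simp: Q_def fc_def)
    show ?thesis unfolding e
      by (rule derivative_eq_intros ds'[OF t] dc'[OF t] refl)+
        (simp add: a_def d_def K_def P_def Q_def fs_def fc_def algebra_simps)
  qed
  have cP: "continuous (at t within {0..}) P" if "t \<ge> 0" for t
    using dP[OF that] by (rule DERIV_continuous)
  have cQ: "continuous (at t within {0..}) Q" if "t \<ge> 0" for t
    using dQ[OF that] by (rule DERIV_continuous)
  have cs: "continuous (at t within {0..}) s" if "t \<ge> 0" for t
    using ds'[OF that] by (rule DERIV_continuous)
  have cc: "continuous (at t within {0..}) c" if "t \<ge> 0" for t
    using dc'[OF that] by (rule DERIV_continuous)
  have ca: "continuous (at t within {0..}) a" if "t \<ge> 0" for t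
    unfolding a_def by (intro continuous_intros cc that)
  have cb: "continuous (at t within {0..}) b" if "t \<ge> 0" for t
    unfolding b_def by (intro continuous_intros cs that)
  have s00: "s 0 \<ge> 0" and c00: "c 0 \<ge> 0"
    and c0le: "c 0 \<le> k1 * eT * s 0 / (k1 * s 0 + km1 + k2)"
    and c0ge: "(k1 * eT * s 0 - k0) / (k1 * s 0 + km1) \<le> c 0"
    using init by (auto simp: W1_def)
  have P0: "P 0 \<ge> 0"
  proof -
    have "k1 * s 0 + km1 > 0" using pos s00 by (simp add: add_nonneg_pos)
    then have "k1 * eT * s 0 - k0 \<le> c 0 * (k1 * s 0 + km1)" using c0ge by (simp add: divide_le_eq)
    then show ?thesis by (simp add: P_def fs_def algebra_simps)
  qed
  have Q0: "Q 0 \<ge> 0"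
  proof -
    have "k1 * s 0 + km1 + k2 > 0" using pos s00 by (simp add: add_nonneg_pos add_pos_pos)
    then have "c 0 * (k1 * s 0 + km1 + k2) \<le> k1 * eT * s 0" using c0le by (simp add: le_divide_eq)
    then show ?thesis by (simp add: Q_def fc_def algebra_simps)
  qed
  have smono: "s 0 \<le> s t" if "\<And>x. 0 \<le> x \<Longrightarrow> x \<le> X \<Longrightarrow> P x \<ge> 0" "0 \<le> t" "t \<le> X" for t X
  proof -
    have "(\<lambda>t. - s t) t \<le> (\<lambda>t. - s t) 0"
      by (rule nonincr[where f' = "\<lambda>t. - P t" and X = X])
        (use that in \<open>auto intro!: derivative_eq_intros ds'\<close>)
    then show ?thesis by simp
  qed
  have cmono: "c 0 \<le> c t" if "\<And>x. 0 \<le> x \<Longrightarrow> x \<le> X \<Longrightarrow> Q x \<ge> 0" "0 \<le> t" "t \<le> X" for t X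
  proof -
    have "(\<lambda>t. - c t) t \<le> (\<lambda>t. - c t) 0"
      by (rule nonincr[where f' = "\<lambda>t. - Q t" and X = X])
        (use that in \<open>auto intro!: derivative_eq_intros dc'\<close>)
    then show ?thesis by simp
  qed
  have abpos: "a t > 0 \<and> b t > 0" if "s t \<ge> 0" "Q t \<ge> 0" for t
  proof
    show "b t > 0" using that pos by (simp add: b_def add_nonneg_pos)
    show "a t > 0"
    proof (rule ccontr)
      assume "\<not> a t > 0"
      then have ce: "c t \<ge> eT" using pos by (simp add: a_def zero_less_mult_iff)
      have kk: "k1 * (eT - c t) \<le> 0" using ce pos by (simp add: mult_nonneg_nonpos)
      have "k1 * (eT - c t) * s t \<le> 0" using mult_nonpos_nonneg[OF kk, of "s t"] that by simp
      moreover have "K * c t > 0" using K0 ce pos by simp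
      ultimately have "Q t < 0" by (simp add: Q_def fc_def K_def)
      then show False using that by simp
    qed
  qed
  have inv: "\<forall>t\<ge>0. P t \<ge> 0 \<and> Q t \<ge> 0"
  proof (rule ccontr)
    define B where "B = {t. 0 \<le> t \<and> (P t < 0 \<or> Q t < 0)}"
    assume "\<not> (\<forall>t\<ge>0. P t \<ge> 0 \<and> Q t \<ge> 0)"
    then obtain t0 where t0: "t0 \<ge> 0" "\<not> (P t0 \<ge> 0 \<and> Q t0 \<ge> 0)" by blast
    then have "t0 \<in> B" unfolding B_def mem_Collect_eq by linarith
    then have Bne: "B \<noteq> {}" by blast
    have bdd: "bdd_below B" by (rule bdd_belowI[of _ 0]) (auto simp: B_def)
    define T where "T = Inf B"
    have T0: "0 \<le> T" unfolding T_def by (rule cInf_greatest[OF Bne]) (auto simp: B_def)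
    have before: "P t \<ge> 0 \<and> Q t \<ge> 0" if "0 \<le> t" "t < T" for t
    proof (rule ccontr)
      assume "\<not> (P t \<ge> 0 \<and> Q t \<ge> 0)"
      then have "t \<in> B" using that by (auto simp: B_def)
      then have "T \<le> t" unfolding T_def using bdd by (rule cInf_lower)
      then show False using that by simp
    qed
    have upto: "P t \<ge> 0 \<and> Q t \<ge> 0" if t: "0 \<le> t" "t \<le> T" for t
    proof (cases "t < T")
      case True then show ?thesis using before t by auto
    next
      case False
      then have tT: "t = T" using t by simp
      show ?thesis
      proof (cases "T = 0")
        case True then show ?thesis using tT P0 Q0 by simp
      next
        case False
        then have Tp: "0 < T" using T0 by simp
        have cl: "closure {0..<T} = {0..T}" using Tp by simp
        have "P T \<ge> 0"
          by (rule continuous_ge_on_closure[of "{0..<T}" P])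
            (use cl Tp before in \<open>auto intro: cont_on_from cP\<close>)
        moreover have "Q T \<ge> 0"
          by (rule continuous_ge_on_closure[of "{0..<T}" Q])
            (use cl Tp before in \<open>auto intro: cont_on_from cQ\<close>)
        ultimately show ?thesis using tT by simp
      qed
    qed
    have abT: "a t > 0 \<and> b t > 0" if "0 \<le> t" "t \<le> T" for t
    proof (rule abpos)
      have "s 0 \<le> s t" by (rule smono[where X=T]) (use upto that in auto)
      then show "s t \<ge> 0" using s00 by simp
      show "Q t \<ge> 0" using upto that by auto
    qed
    have eva: "\<forall>\<^sub>F t in at T within {0..}. a t > 0"
      using ca[OF T0] abT[OF T0] by (auto simp: continuous_within intro: order_tendstoD(1))
    have evb: "\<forall>\<^sub>F t in at T within {0..}. b t > 0"
      using cb[OF T0] abT[OF T0] by (auto simp: continuous_within intro: order_tendstoD(1))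
    have "\<exists>d>0. \<forall>x\<in>{0..}. x \<noteq> T \<and> dist x T < d \<longrightarrow> a x > 0 \<and> b x > 0"
      using eventually_conj[OF eva evb] by (simp only: eventually_at)
    then obtain \<delta> where dp: "\<delta> > 0" and dd: "\<And>t. t \<in> {0..} \<Longrightarrow> t \<noteq> T \<Longrightarrow> dist t T < \<delta> \<Longrightarrow> a t > 0 \<and> b t > 0"
      by blast
    define X where "X = T + \<delta>/2"
    have X0: "0 \<le> X" using T0 dp by (simp add: X_def)
    have abX: "a t > 0 \<and> b t > 0" if "0 \<le> t" "t \<le> X" for t
    proof (cases "t \<le> T")
      case True then show ?thesis using abT that by auto
    next
      case False
      then show ?thesis using dd[of t] that dp by (auto simp: X_def dist_real_def)
    qed
    have "continuous_on {0..X} (\<lambda>t. a t + b t)"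
      by (intro cont_on_from continuous_intros ca cb)
    then obtain tm where "tm \<in> {0..X}" "\<forall>y\<in>{0..X}. a y + b y \<le> a tm + b tm"
      using continuous_attains_sup[of "{0..X}" "\<lambda>t. a t + b t"] X0 by auto
    then obtain M where M: "\<And>t. 0 \<le> t \<Longrightarrow> t \<le> X \<Longrightarrow> a t + b t \<le> M"
      using atLeastAtMost_iff by blast
    define V where "V t = (min (P t) 0)^2 + (min (Q t) 0)^2" for t
    define V' where "V' t = 2*min (P t) 0*(-a t*P t + b t*Q t) + 2*min (Q t) 0*(a t*P t - d t*Q t)" for t
    have dV: "(V has_real_derivative V' t) (at t within {0..})" if "t \<ge> 0" for t
    proof -
      have h1: "((\<lambda>t. (min (P t) 0)^2) has_real_derivative 2*min (P t) 0 * (-a t*P t + b t*Q t)) (at t within {0..})"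
        using DERIV_chain2[OF hneg_deriv[of "P t"] dP[OF that]] by simp
      have h2: "((\<lambda>t. (min (Q t) 0)^2) has_real_derivative 2*min (Q t) 0 * (a t*P t - d t*Q t)) (at t within {0..})"
        using DERIV_chain2[OF hneg_deriv[of "Q t"] dQ[OF that]] by simp
      note DERIV_add[OF h1 h2]
      then show ?thesis by (simp add: V_def[abs_def] V'_def)
    qed
    define W where "W t = V t * exp (- M * t)" for t
    have dW: "(W has_real_derivative (V' t * exp (- M * t) - M * V t * exp (- M * t))) (at t within {0..})"
      if "t \<ge> 0" for t
      unfolding W_def[abs_def]
      by (rule derivative_eq_intros dV[OF that] refl)+ (simp add: algebra_simps)
    have Wn: "W t \<le> W 0" if "0 \<le> t" "t \<le> X" for t
    proof (rule nonincr[OF dW _ that])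
      fix x assume x: "0 \<le> x" "x \<le> X"
      have "V' x \<le> M * V x"
        unfolding V'_def V_def
        by (rule vbound) (use abX[OF x] M[OF x] K0 pos x in \<open>auto simp: d_def b_def K_def\<close>)
      then show "V' x * exp (- M * x) - M * V x * exp (- M * x) \<le> 0"
        by (simp add: algebra_simps)
    qed
    have good: "P t \<ge> 0 \<and> Q t \<ge> 0" if "0 \<le> t" "t \<le> X" for t
    proof -
      have "W 0 = 0" using P0 Q0 by (simp add: W_def V_def)
      then have "V t * exp (- M * t) \<le> 0" using Wn[OF that] by (simp add: W_def)
      then have "V t \<le> 0" by (simp add: mult_le_0_iff)
      then have A: "(min (P t) 0)^2 \<le> 0" "(min (Q t) 0)^2 \<le> 0"
        using zero_le_power2[of "min (Q t) 0"] zero_le_power2[of "min (P t) 0"] unfolding V_def by linarith+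
      then have "min (P t) 0 = 0" "min (Q t) 0 = 0" by simp_all
      then show ?thesis by (simp add: min_def split: if_splits)
    qed
    have "X \<le> T" unfolding T_def
    proof (rule cInf_greatest[OF Bne])
      fix x assume "x \<in> B"
      then have x: "0 \<le> x" "P x < 0 \<or> Q x < 0" by (simp_all add: B_def)
      show "X \<le> x"
      proof (rule ccontr)
        assume "\<not> X \<le> x"
        then have "P x \<ge> 0 \<and> Q x \<ge> 0" using good[of x] x(1) by simp
        then show False using x(2) by linarith
      qed
    qed
    then show False using dp by (simp add: X_def)
  qed
  have sge: "s t \<ge> 0" if "t \<ge> 0" for t
  proof -
    have "s 0 \<le> s t"
    proof (rule smono[where X=t])
      fix x :: real assume "0 \<le> x" "x \<le> t"
      then show "P x \<ge> 0" using inv by blast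
    qed (use that in simp_all)
    then show ?thesis using s00 by simp
  qed
  have cge: "c t \<ge> 0" if "t \<ge> 0" for t
  proof -
    have "c 0 \<le> c t"
    proof (rule cmono[where X=t])
      fix x :: real assume "0 \<le> x" "x \<le> t"
      then show "Q x \<ge> 0" using inv by blast
    qed (use that in simp_all)
    then show ?thesis using c00 by simp
  qed
  have Pk: "P t \<le> k0" if t: "t \<ge> 0" for t
  proof -
    have "P t + Q t = k0 - k2 * c t" by (simp add: P_def Q_def fs_def fc_def algebra_simps)
    moreover have "k2 * c t \<ge> 0" using pos cge[OF t] by simp
    moreover have "Q t \<ge> 0" using inv t by blast
    ultimately show ?thesis by linarith
  qed
  define F where "F = (\<lambda>t. \<bar>fs k0 k1 km1 k2 eT (s t) (c t)\<bar>) ` {0..}"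
  have vF: "v = Sup F" by (simp add: v_def F_def)
  have FP: "F = (\<lambda>t. \<bar>P t\<bar>) ` {0..}" by (simp add: F_def P_def)
  have Fne: "F \<noteq> {}" by (simp add: FP)
  have Fle: "x \<le> k0" if "x \<in> F" for x
  proof -
    obtain t where t: "t \<ge> 0" "x = \<bar>P t\<bar>" using \<open>x \<in> F\<close> by (auto simp: FP)
    then show ?thesis using Pk[OF t(1)] inv by simp
  qed
  have Fb: "bdd_above F" using Fle by (intro bdd_aboveI[of _ k0]) blast
  have vk0: "v \<le> k0" unfolding vF by (rule cSup_least[OF Fne]) (rule Fle)
  have Pv: "\<bar>P t\<bar> \<le> v" if "t \<ge> 0" for t
    unfolding vF by (rule cSup_upper[OF _ Fb]) (use that in \<open>simp add: FP\<close>)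
  have v0: "0 \<le> v" using Pv[of 0] by simp
  define E where "E = k1 * eT / K * v"
  have E0: "E \<ge> 0" using pos K0 v0 by (simp add: E_def)
  define u where "u t = c t - w k1 km1 k2 eT (s t)" for t
  define g where "g t = k1 * eT * K / (k1 * s t + K)^2" for t
  have Dpos: "k1 * s t + K \<ge> K" if "t \<ge> 0" for t using sge[OF that] pos by simp
  have Qu: "Q t = - (k1 * s t + K) * u t" if t: "t \<ge> 0" for t
  proof -
    have "k1 * s t + K > 0" using Dpos[OF t] K0 by linarith
    then show ?thesis
      by (simp add: Q_def fc_def u_def w_def K_def field_simps)
  qed
  have du: "(u has_real_derivative (Q t - g t * P t)) (at t within {0..})" if t: "t \<ge> 0" for t
  proof -
    have den: "k1 * s t + km1 + k2 > 0" using Dpos[OF t] K0 by (simp add: K_def)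
    have e: "u = (\<lambda>t. c t - k1 * eT * s t / (k1 * s t + km1 + k2))"
      by (auto simp: u_def w_def)
    have d1: "((\<lambda>t. k1 * s t + km1 + k2) has_real_derivative k1 * P t) (at t within {0..})"
      using DERIV_add[OF DERIV_add[OF DERIV_cmult[OF ds'[OF t], of k1] DERIV_const[of km1]] DERIV_const[of k2]] by simp
    have d2: "((\<lambda>t. k1 * eT * s t) has_real_derivative k1 * eT * P t) (at t within {0..})"
      using DERIV_cmult[OF ds'[OF t], of "k1*eT"] by simp
    have "((\<lambda>t. c t - k1 * eT * s t / (k1 * s t + km1 + k2)) has_real_derivative
       (Q t - (k1 * eT * P t * (k1 * s t + km1 + k2) - k1 * eT * s t * (k1 * P t)) / ((k1 * s t + km1 + k2) * (k1 * s t + km1 + k2)))) (at t within {0..})"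
      using DERIV_diff[OF dc'[OF t] DERIV_divide[OF d2 d1]] den by simp
    moreover have "(k1 * eT * P t * (k1 * s t + km1 + k2) - k1 * eT * s t * (k1 * P t)) / ((k1 * s t + km1 + k2) * (k1 * s t + km1 + k2))
       = g t * P t"
      using den unfolding g_def K_def by (simp add: field_simps power2_eq_square)
    ultimately show ?thesis unfolding e by simp
  qed
  have dbound: "2 * u t * (Q t - g t * P t) \<le> - K * (u t)^2 + E^2 / K" if t: "t \<ge> 0" for t
  proof -
    have D: "k1 * s t + K \<ge> K" using Dpos[OF t] .
    have g0: "g t \<ge> 0" using pos K0 by (simp add: g_def)
    have gle: "g t \<le> k1 * eT / K"
    proof -
      have kk2: "K * K \<le> (k1 * s t + K)^2" using D K0 by (simp add: power2_eq_square mult_mono)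
      have "(k1 * s t + K)^2 > 0" using D K0 by simp
      then have "k1 * eT * K / (k1 * s t + K)^2 \<le> k1 * eT * K / (K * K)"
        using pos K0 kk2 \<open>(k1 * s t + K)^2 > 0\<close> by (intro divide_left_mono) auto
      then show ?thesis using K0 by (simp add: g_def)
    qed
    have gP: "g t * \<bar>P t\<bar> \<le> E"
      unfolding E_def using mult_mono[OF gle Pv[OF t]] pos K0 v0 by simp
    have "2 * u t * (Q t - g t * P t) = - 2 * (k1 * s t + K) * (u t)^2 - 2 * u t * (g t * P t)"
      by (simp add: Qu[OF t] power2_eq_square algebra_simps)
    also have "\<dots> \<le> - 2 * K * (u t)^2 + 2 * \<bar>u t\<bar> * E"
    proof -
      have ks: "0 \<le> (k1 * s t) * (u t)^2" using D by simp
      have "- 2 * (k1 * s t + K) * (u t)^2 = - 2 * K * (u t)^2 - 2 * ((k1 * s t) * (u t)^2)"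
        by (simp add: algebra_simps)
      then have "- 2 * (k1 * s t + K) * (u t)^2 \<le> - 2 * K * (u t)^2"
        using ks by linarith
      moreover have "- (u t * (g t * P t)) \<le> \<bar>u t\<bar> * E"
      proof -
        have "- (u t * (g t * P t)) \<le> \<bar>u t * (g t * P t)\<bar>" by simp
        also have "\<dots> = \<bar>u t\<bar> * (g t * \<bar>P t\<bar>)" using g0 by (simp add: abs_mult)
        also have "\<dots> \<le> \<bar>u t\<bar> * E" using gP by (simp add: mult_left_mono)
        finally show ?thesis .
      qed
      ultimately show ?thesis by linarith
    qed
    also have "\<dots> \<le> - K * (u t)^2 + E^2 / K"
    proof -
      have "0 \<le> (K * \<bar>u t\<bar> - E)^2" by simp
      then have "2 * K * \<bar>u t\<bar> * E \<le> K^2 * (u t)^2 + E^2"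
        by (simp add: power2_eq_square algebra_simps)
      then have "2 * \<bar>u t\<bar> * E \<le> (K^2 * (u t)^2 + E^2) / K"
        using K0 by (simp add: le_divide_eq algebra_simps)
      also have "\<dots> = K * (u t)^2 + E^2 / K" using K0 by (simp add: field_simps power2_eq_square)
      finally show ?thesis by linarith
    qed
    finally show ?thesis .
  qed
  define C where "C = E^2 / K^2"
  define Z where "Z t = ((u t)^2 - C) * exp (K * t)" for t
  have dZ: "(Z has_real_derivative ((2 * u t * (Q t - g t * P t) + K * ((u t)^2 - C)) * exp (K * t))) (at t within {0..})"
    if t: "t \<ge> 0" for t
    unfolding Z_def[abs_def]
    by (rule derivative_eq_intros du[OF t] refl)+ (simp add: algebra_simps)
  have main: "(u t)^2 \<le> (u 0)^2 * exp (- (K * t)) + C * (1 - exp (- (K * t)))" if t: "t \<ge> 0" for t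
  proof -
    have "Z t \<le> Z 0"
    proof (rule nonincr[OF dZ _ t order_refl])
      fix x assume x: "0 \<le> x" "x \<le> t"
      have "2 * u x * (Q x - g x * P x) + K * ((u x)^2 - C) \<le> 0"
      proof -
        have "K * ((u x)^2 - C) = K * (u x)^2 - E^2 / K"
          using K0 by (simp add: C_def field_simps power2_eq_square)
        then show ?thesis using dbound[OF x(1)] by linarith
      qed
      then show "(2 * u x * (Q x - g x * P x) + K * ((u x)^2 - C)) * exp (K * x) \<le> 0"
        by (simp add: mult_nonpos_nonneg)
    qed
    then have "((u t)^2 - C) * exp (K * t) \<le> (u 0)^2 - C" by (simp add: Z_def)
    then have "((u t)^2 - C) * exp (K * t) * exp (- (K * t)) \<le> ((u 0)^2 - C) * exp (- (K * t))"
      by (simp add: mult_right_mono)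
    then have "(u t)^2 - C \<le> ((u 0)^2 - C) * exp (- (K * t))"
      by (simp add: mult.assoc exp_minus_inverse)
    then show ?thesis by (simp add: algebra_simps)
  qed
  have Lu: "L t ^ 2 = (u t)^2" for t by (simp add: L_def u_def)
  have tauK: "tau0 km1 k2 = K" by (simp add: tau0_def K_def)
  have epsE: "eps_c k1 km1 k2 eT * v = E" by (simp add: eps_c_def E_def K_def)
  have Ek: "E^2 \<le> (eps_c k1 km1 k2 eT * k0)^2"
  proof -
    have "E \<le> eps_c k1 km1 k2 eT * k0"
      unfolding epsE[symmetric] using vk0 pos K0 by (intro mult_left_mono) (auto simp: eps_c_def K_def[symmetric])
    then show ?thesis using E0 by (simp add: power_mono)
  qed
  show ?thesis
  proof (intro allI impI conjI)
    fix t :: real assume t: "t \<ge> 0"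
    have ex: "0 \<le> 1 - exp (- (K * t))" "1 - exp (- (K * t)) \<le> 1" using t K0 by auto
    show A: "L t ^ 2 \<le> L 0 ^ 2 * exp (- (tau0 km1 k2 * t))
        + (eps_c k1 km1 k2 eT * v)^2 / (tau0 km1 k2)^2 * (1 - exp (- (tau0 km1 k2 * t)))"
      using main[OF t] unfolding Lu tauK epsE C_def by (simp add: algebra_simps)
    have "C * (1 - exp (- (K * t))) \<le> (eps_c k1 km1 k2 eT * k0)^2 / (km1 + k2)^2"
    proof -
      have C0: "C \<ge> 0" by (simp add: C_def)
      have "C * (1 - exp (- (K * t))) \<le> C" using mult_left_mono[OF ex(2) C0] by simp
      also have "C \<le> (eps_c k1 km1 k2 eT * k0)^2 / (km1 + k2)^2"
        unfolding C_def K_def[symmetric] using Ek K0 by (simp add: divide_right_mono)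
      finally show ?thesis .
    qed
    then show "L t ^ 2 \<le> L 0 ^ 2 * exp (- (tau0 km1 k2 * t))
        + (eps_c k1 km1 k2 eT * k0)^2 / (km1 + k2)^2"
      using main[OF t] unfolding Lu tauK by linarith
    have "(eps_c k1 km1 k2 eT * k0)^2 / (km1 + k2)^2 = (eps_star k0 k1 km1 k2 eT)^2"
      using K0 by (simp add: eps_c_def eps_star_def K_def[symmetric] power_divide field_simps power2_eq_square)
    then show "L 0 ^ 2 * exp (- (tau0 km1 k2 * t)) + (eps_c k1 km1 k2 eT * k0)^2 / (km1 + k2)^2
      = L 0 ^ 2 * exp (- (tau0 km1 k2 * t)) + (eps_star k0 k1 km1 k2 eT)^2" by simp
  qed
qed

end
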